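(* There exists a continuous, $2$-periodic matrix function $A:\mathbb{R}\to\mathbb{R}^{2\times 2}$, with positive off-diagonal entries and with principal eigenvalue equal to $-\tfrac12$ for every $t$, such that for every continuous function $a:[0,\infty)\to\mathbb{R}$ with $0<a(t)<\tfrac14$ for all $t\ge0$ (in particular for non-periodic ones, e.g. $a(t)=\tfrac1{16}(2+\sin t+\sin(\sqrt2\,t))$), the matrices $\hat A(t)=A(t)+a(t)I$ have positive off-diagonal entries and principal eigenvalue $-\tfrac12+a(t)<-\tfrac14$ for all $t\ge0$, and the system $y'=\hat A(t)y$ has a solution $v(t)$ with $\|v(2k)\|\to\infty$ as $k\to\infty$ ($k\in\mathbb{N}$).
   Context: A $2\times2$ real matrix with positive off-diagonal entries has two distinct real eigenvalues; the larger is called its principal eigenvalue. $I$ is the $2\times 2$ identity matrix and $\|\cdot\|$ the Euclidean norm on $\mathbb{R}^2$. *)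

theory Defs
  imports "HOL-Analysis.Analysis"
begin

definition real_eigenvalue :: "real^2^2 \<Rightarrow> real \<Rightarrow> bool" where
  "real_eigenvalue M c \<longleftrightarrow> (\<exists>x. x \<noteq> 0 \<and> M *v x = c *\<^sub>R x)"

definition principal_eigenvalue :: "real^2^2 \<Rightarrow> real" where
  "principal_eigenvalue M = Max {c. real_eigenvalue M c}"

definition pos_offdiag :: "real^2^2 \<Rightarrow> bool" where
  "pos_offdiag M \<longleftrightarrow> M $ 1 $ 2 > 0 \<and> M $ 2 $ 1 > 0"

end

theory Submission
  imports Defs
begin

lemma eig_det:
  fixes M :: "real^2^2"
  assumes "M$1$2 \<noteq> 0"
  shows "real_eigenvalue M c \<longleftrightarrow> (M$1$1 - c) * (M$2$2 - c) - M$1$2 * M$2$1 = 0"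
proof
  assume "real_eigenvalue M c"
  then obtain x where x: "x \<noteq> 0" "M *v x = c *\<^sub>R x" unfolding real_eigenvalue_def by blast
  have e1: "M$1$1 * x$1 + M$1$2 * x$2 = c * x$1" and e2: "M$2$1 * x$1 + M$2$2 * x$2 = c * x$2"
    using x(2) by (auto simp: vec_eq_iff forall_2 matrix_vector_mult_def sum_2)
  have "x$1 \<noteq> 0 \<or> x$2 \<noteq> 0" using x(1) by (auto simp: vec_eq_iff forall_2)
  moreover have "((M$1$1 - c) * (M$2$2 - c) - M$1$2 * M$2$1) * x$1 = 0"
    using e1 e2 by algebra
  moreover have "((M$1$1 - c) * (M$2$2 - c) - M$1$2 * M$2$1) * x$2 = 0"
    using e1 e2 by algebra
  ultimately show "(M$1$1 - c) * (M$2$2 - c) - M$1$2 * M$2$1 = 0" by auto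
next
  assume d: "(M$1$1 - c) * (M$2$2 - c) - M$1$2 * M$2$1 = 0"
  define x :: "real^2" where "x = vector [M$1$2, c - M$1$1]"
  have "x \<noteq> 0" using assms by (auto simp: x_def vec_eq_iff forall_2)
  moreover have "M *v x = c *\<^sub>R x"
    using d by (auto simp: x_def vec_eq_iff forall_2 matrix_vector_mult_def sum_2 algebra_simps)
  ultimately show "real_eigenvalue M c" unfolding real_eigenvalue_def by blast
qed

definition Am :: "real \<Rightarrow> real^2^2" where
  "Am t = vector [vector [-1/2 - 4*(2 + sin(pi*t)), 2*(2 + sin(pi*t))^2 * exp(-(8*cos(pi*t)/pi))],
                  vector [4*(2 - sin(pi*t)) * exp(8*cos(pi*t)/pi), -1/2 - 2*(2 - sin(pi*t))*(2 + sin(pi*t))]]"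

lemma Am_entries:
  "Am t $1$1 = -1/2 - 4*(2 + sin(pi*t))"
  "Am t $1$2 = 2*(2 + sin(pi*t))^2 * exp(-(8*cos(pi*t)/pi))"
  "Am t $2$1 = 4*(2 - sin(pi*t)) * exp(8*cos(pi*t)/pi)"
  "Am t $2$2 = -1/2 - 2*(2 - sin(pi*t))*(2 + sin(pi*t))"
  by (simp_all add: Am_def)

lemma sin_bounds: "-1 \<le> sin x" "sin x \<le> (1::real)"
  by auto

lemma Ahat_props:
  fixes a t :: real
  defines "M \<equiv> Am t + a *\<^sub>R mat 1"
  shows "pos_offdiag M \<and> principal_eigenvalue M = -1/2 + a"
proof -
  define s where "s = sin(pi*t)"
  have s1: "-1 \<le> s" "s \<le> 1" unfolding s_def by auto
  have m: "M$1$1 = a - 1/2 - 4*(2 + s)" "M$1$2 = 2*(2 + s)^2 * exp(-(8*cos(pi*t)/pi))"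
     "M$2$1 = 4*(2 - s) * exp(8*cos(pi*t)/pi)" "M$2$2 = a - 1/2 - 2*(2 - s)*(2 + s)"
    by (simp_all add: M_def Am_entries mat_def s_def)
  have p1: "M$1$2 > 0" using s1 by (simp add: m)
  have p2: "M$2$1 > 0" using s1 by (simp add: m)
  have prod: "M$1$2 * M$2$1 = 8*(2+s)^2*(2-s)"
  proof -
    have "exp(-(8*cos(pi*t)/pi)) * exp(8*cos(pi*t)/pi) = 1" by (simp add: exp_minus)
    then show ?thesis unfolding m by (simp add: power2_eq_square algebra_simps)
  qed
  have eq: "{c. real_eigenvalue M c} = {a - 1/2, a - 1/2 - 4*(2+s) - 2*(2-s)*(2+s)}"
  proof -
    have "\<And>c. real_eigenvalue M c \<longleftrightarrow>
       (c - (a - 1/2)) * (c - (a - 1/2 - 4*(2+s) - 2*(2-s)*(2+s))) = 0"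
    proof -
      fix c
      have "(M$1$1 - c) * (M$2$2 - c) - M$1$2 * M$2$1 = (c - (a - 1/2)) * (c - (a - 1/2 - 4*(2+s) - 2*(2-s)*(2+s)))"
        unfolding prod unfolding m(1) m(4) by (simp add: field_simps power2_eq_square)
      then show "real_eigenvalue M c \<longleftrightarrow>
       (c - (a - 1/2)) * (c - (a - 1/2 - 4*(2+s) - 2*(2-s)*(2+s))) = 0"
        using eig_det[of M c] p1 by simp
    qed
    then show ?thesis by auto
  qed
  have tr: "a - 1/2 - 4*(2+s) - 2*(2-s)*(2+s) < a - 1/2"
  proof -
    have "0 \<le> 2 * (2 - s) * (2 + s)" using s1 by simp
    moreover have "0 < 4*(2+s)" using s1 by simp
    moreover have "\<And>P Q. 0 \<le> P \<Longrightarrow> 0 < Q \<Longrightarrow> a - 1/2 - Q - P < a - 1/2" by linarith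
    ultimately show ?thesis by blast
  qed
  show ?thesis
    using p1 p2 tr by (simp add: pos_offdiag_def principal_eigenvalue_def eq)
qed


lemma Am_cont: "continuous_on UNIV Am"
proof -
  have eq: "Am = (\<lambda>t. \<chi> i. \<chi> j. Am t $ i $ j)" by simp
  have c11: "continuous_on UNIV (\<lambda>t. Am t $1$1)" unfolding Am_entries by (intro continuous_intros)
  have c12: "continuous_on UNIV (\<lambda>t. Am t $1$2)" unfolding Am_entries by (intro continuous_intros) auto
  have c21: "continuous_on UNIV (\<lambda>t. Am t $2$1)" unfolding Am_entries by (intro continuous_intros) auto
  have c22: "continuous_on UNIV (\<lambda>t. Am t $2$2)" unfolding Am_entries by (intro continuous_intros)
  have "continuous_on UNIV (\<lambda>t. Am t $ i $ j)" for i j :: 2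
    using exhaust_2[of i] exhaust_2[of j] c11 c12 c21 c22 by auto
  then show ?thesis
    by (subst eq) (intro continuous_on_vec_lambda)
qed

lemma Am_per: "Am (t + 2) = Am t"
proof -
  have e: "pi*(t+2) = pi*t + 2*pi" by algebra
  show ?thesis unfolding Am_def e by simp
qed

lemma G_deriv:
  fixes a :: "real \<Rightarrow> real"
  assumes "continuous_on {0..} a" "t \<ge> 0"
  shows "((\<lambda>u. integral {0..u} a) has_real_derivative a t) (at t within {0..})"
proof -
  have c: "continuous_on {0..t+1} a" using assms(1) by (rule continuous_on_subset) auto
  have d: "((\<lambda>u. integral {0..u} a) has_vector_derivative a t) (at t within {0..t+1})"
    using integral_has_vector_derivative[OF c] assms(2) by simp
  have "at t within {0..} = at t within {0..t+1}"
    by (rule at_within_nhd[where S="{..<t+1}"]) auto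
  then show ?thesis using d by (simp add: has_real_derivative_iff_has_vector_derivative)
qed

theorem mainTheorem3:
  shows "\<exists>A :: real \<Rightarrow> real^2^2.
    continuous_on UNIV A \<and>
    (\<forall>t. A (t + 2) = A t) \<and>
    (\<forall>t. pos_offdiag (A t) \<and> principal_eigenvalue (A t) = - 1/2) \<and>
    (\<forall>a :: real \<Rightarrow> real.
       continuous_on {0..} a \<and> (\<forall>t\<ge>0. 0 < a t \<and> a t < 1/4) \<longrightarrow>
       (\<forall>t\<ge>0. pos_offdiag (A t + a t *\<^sub>R mat 1) \<and>
               principal_eigenvalue (A t + a t *\<^sub>R mat 1) = - 1/2 + a t \<and>
               - 1/2 + a t < - 1/4) \<and>
       (\<exists>v :: real \<Rightarrow> real^2.
          (\<forall>t\<ge>0. (v has_vector_derivative ((A t + a t *\<^sub>R mat 1) *v v t)) (at t within {0..})) \<and>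
          filterlim (\<lambda>k::nat. norm (v (2 * real k))) at_top sequentially))"
proof (rule exI[of _ Am], intro conjI)
  show "continuous_on UNIV Am" by (rule Am_cont)
  show "\<forall>t. Am (t + 2) = Am t" using Am_per by simp
  show "\<forall>t. pos_offdiag (Am t) \<and> principal_eigenvalue (Am t) = - 1/2"
    using Ahat_props[of _ 0] by simp
  show "\<forall>a :: real \<Rightarrow> real.
       continuous_on {0..} a \<and> (\<forall>t\<ge>0. 0 < a t \<and> a t < 1/4) \<longrightarrow>
       (\<forall>t\<ge>0. pos_offdiag (Am t + a t *\<^sub>R mat 1) \<and>
               principal_eigenvalue (Am t + a t *\<^sub>R mat 1) = - 1/2 + a t \<and>
               - 1/2 + a t < - 1/4) \<and>
       (\<exists>v :: real \<Rightarrow> real^2.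
          (\<forall>t\<ge>0. (v has_vector_derivative ((Am t + a t *\<^sub>R mat 1) *v v t)) (at t within {0..})) \<and>
          filterlim (\<lambda>k::nat. norm (v (2 * real k))) at_top sequentially)"
  proof (intro allI impI, rule conjI)
  fix a :: "real \<Rightarrow> real"
  assume asm: "continuous_on {0..} a \<and> (\<forall>t\<ge>0. 0 < a t \<and> a t < 1/4)"
  then have ac: "continuous_on {0..} a" and apos: "\<And>t. t \<ge> 0 \<Longrightarrow> 0 < a t \<and> a t < 1/4" by auto
  show "\<forall>t\<ge>0. pos_offdiag (Am t + a t *\<^sub>R mat 1) \<and>
               principal_eigenvalue (Am t + a t *\<^sub>R mat 1) = - 1/2 + a t \<and>
               - 1/2 + a t < - 1/4"
    using Ahat_props apos by fastforce
  define G where "G u = integral {0..u} a" for u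
  define g1 where "g1 u = G u + u/2 - 4*cos(pi*u)/pi - sin(2*pi*u)/(2*pi)" for u
  define g2 where "g2 u = G u + u/2 + 4*cos(pi*u)/pi - sin(2*pi*u)/(2*pi)" for u
  define e1 :: "real^2" where "e1 = vector [1, 0]"
  define e2 :: "real^2" where "e2 = vector [0, 1]"
  define v where "v u = exp (g1 u) *\<^sub>R e1 + exp (g2 u) *\<^sub>R e2" for u
  show "\<exists>v :: real \<Rightarrow> real^2.
          (\<forall>t\<ge>0. (v has_vector_derivative ((Am t + a t *\<^sub>R mat 1) *v v t)) (at t within {0..})) \<and>
          filterlim (\<lambda>k::nat. norm (v (2 * real k))) at_top sequentially"
  proof (intro exI[of _ v] conjI allI impI)
    fix t :: real assume t0: "t \<ge> 0"
    have GD: "(G has_real_derivative a t) (at t within {0..})"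
      unfolding G_def by (rule G_deriv[OF ac t0])
    define q where "q = sin(pi*t)"
    have c2: "cos(2*pi*t) = 1 - 2*q^2"
      unfolding q_def using cos_double_sin[of "pi*t"] by (simp add: mult.assoc)
    have d1: "(g1 has_real_derivative (a t + 1/2 + 4*q - cos(2*pi*t))) (at t within {0..})"
      unfolding g1_def q_def
      by (rule derivative_eq_intros GD refl | simp)+
    have d2: "(g2 has_real_derivative (a t + 1/2 - 4*q - cos(2*pi*t))) (at t within {0..})"
      unfolding g2_def q_def
      by (rule derivative_eq_intros GD refl | simp)+
    have dv: "(v has_vector_derivative
        ((exp (g1 t) * (a t + 1/2 + 4*q - cos(2*pi*t))) *\<^sub>R e1 +
         (exp (g2 t) * (a t + 1/2 - 4*q - cos(2*pi*t))) *\<^sub>R e2)) (at t within {0..})"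
      unfolding v_def
      by (rule derivative_eq_intros d1 d2 refl | simp)+
    define K where "K = 8*cos(pi*t)/pi"
    have k1: "exp (-K) * exp (g2 t) = exp (g1 t)"
      unfolding g1_def g2_def K_def by (simp add: exp_add[symmetric])
    have k2: "exp K * exp (g1 t) = exp (g2 t)"
      unfolding g1_def g2_def K_def by (simp add: exp_add[symmetric])
    have m: "(Am t + a t *\<^sub>R mat 1)$1$1 = a t - 1/2 - 4*(2 + q)"
       "(Am t + a t *\<^sub>R mat 1)$1$2 = 2*(2 + q)^2 * exp(-K)"
       "(Am t + a t *\<^sub>R mat 1)$2$1 = 4*(2 - q) * exp K"
       "(Am t + a t *\<^sub>R mat 1)$2$2 = a t - 1/2 - 2*(2 - q)*(2 + q)"
      by (simp_all add: Am_entries mat_def q_def K_def)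
    have r1: "(Am t + a t *\<^sub>R mat 1)$1$1 * exp (g1 t) + (Am t + a t *\<^sub>R mat 1)$1$2 * exp (g2 t)
        = exp (g1 t) * (a t + 1/2 + 4*q - cos(2*pi*t))"
    proof -
      have "(Am t + a t *\<^sub>R mat 1)$1$2 * exp (g2 t) = 2*(2 + q)^2 * exp (g1 t)"
        unfolding m(2) using k1 by (simp add: mult.assoc)
      then show ?thesis unfolding m(1) c2 by (simp add: algebra_simps power2_eq_square)
    qed
    have r2: "(Am t + a t *\<^sub>R mat 1)$2$1 * exp (g1 t) + (Am t + a t *\<^sub>R mat 1)$2$2 * exp (g2 t)
        = exp (g2 t) * (a t + 1/2 - 4*q - cos(2*pi*t))"
    proof -
      have "(Am t + a t *\<^sub>R mat 1)$2$1 * exp (g1 t) = 4*(2 - q) * exp (g2 t)"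
        unfolding m(3) using k2 by (simp add: mult.assoc)
      then show ?thesis unfolding m(4) c2 by (simp add: algebra_simps power2_eq_square)
    qed
    have "(exp (g1 t) * (a t + 1/2 + 4*q - cos(2*pi*t))) *\<^sub>R e1 +
         (exp (g2 t) * (a t + 1/2 - 4*q - cos(2*pi*t))) *\<^sub>R e2 = (Am t + a t *\<^sub>R mat 1) *v v t"
      using r1 r2
      by (simp add: vec_eq_iff forall_2 matrix_vector_mult_def sum_2 v_def e1_def e2_def)
    then show "(v has_vector_derivative ((Am t + a t *\<^sub>R mat 1) *v v t)) (at t within {0..})"
      using dv by simp
  next
    have lb: "-4/pi + real k \<le> norm (v (2 * real k))" for k :: nat
    proof -
      have "integral {0..2 * real k} a \<ge> 0"
      proof (rule integral_nonneg)
        show "a integrable_on {0..2 * real k}"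
          by (rule integrable_continuous_interval, rule continuous_on_subset[OF ac]) auto
        show "0 \<le> a x" if "x \<in> {0..2 * real k}" for x using apos[of x] that by auto
      qed
      moreover have "cos(pi*(2*real k)) = 1"
        using cos_2npi[of k] by (simp add: mult_ac)
      moreover have "sin(2*pi*(2*real k)) = 0"
        using sin_npi[of "4*k"] by (simp add: mult_ac)
      ultimately have "g1 (2*real k) \<ge> real k - 4/pi"
        unfolding g1_def G_def by simp
      then have "exp (g1 (2*real k)) \<ge> real k - 4/pi"
        using exp_ge_add_one_self[of "g1 (2*real k)"] by linarith
      moreover have "v (2*real k) $ 1 = exp (g1 (2*real k))"
        by (simp add: v_def e1_def e2_def)
      moreover have "\<bar>v (2*real k) $ 1\<bar> \<le> norm (v (2 * real k))"
        by (rule component_le_norm_cart)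
      ultimately show ?thesis by simp
    qed
    have "filterlim (\<lambda>k::nat. -4/pi + real k) at_top sequentially"
      by (rule filterlim_tendsto_add_at_top[OF tendsto_const filterlim_real_sequentially])
    then show "filterlim (\<lambda>k::nat. norm (v (2 * real k))) at_top sequentially"
      by (rule filterlim_at_top_mono) (use lb in auto)
  qed
qed
qed

end
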